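(* Let $\Gamma$ be a numerical semigroup, $e'\in\Gamma$, and $\Gamma_{e'}=\{0\}\cup(e'+\Gamma)$. For all $m,m'\in\Gamma$, \[ D_{\Gamma_{e'}}(2e'+m,2e'+m')=\big(e'+D_\Gamma(m,m')\big)\cup\{0,2e'+m,2e'+m'\}. \] If in addition $|m-m'|<e'$, this union is disjoint; in particular \[ |D_\Gamma(m,m')|+2\le|D_{\Gamma_{e'}}(2e'+m,2e'+m')|\le|D_\Gamma(m,m')|+3. \]
   Context: A numerical semigroup is a subset of $\mathbb N$ containing $0$, closed under addition, with finite complement. For a numerical semigroup $S$ and $x\in\mathbb Z$, $D_S(x)=\{s\in S:x-s\in S\}$ and $D_S(x_1,x_2)=D_S(x_1)\cup D_S(x_2)$. *)

theory Defs
  imports Main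
begin

definition numerical_semigroup :: "nat set \<Rightarrow> bool" where
  "numerical_semigroup S \<longleftrightarrow> 0 \<in> S \<and> (\<forall>a\<in>S. \<forall>b\<in>S. a + b \<in> S) \<and> finite (UNIV - S)"

text \<open>D_S(x) = {s in S. x - s in S}; for natural x the condition x - s in S (integer subtraction)
  means s \<le> x and the natural difference lies in S.\<close>
definition Dset :: "nat set \<Rightarrow> nat \<Rightarrow> nat set" where
  "Dset S x = {s \<in> S. s \<le> x \<and> x - s \<in> S}"

definition Dset2 :: "nat set \<Rightarrow> nat \<Rightarrow> nat \<Rightarrow> nat set" where
  "Dset2 S x1 x2 = Dset S x1 \<union> Dset S x2"

definition shifted_sg :: "nat set \<Rightarrow> nat \<Rightarrow> nat set" where
  "shifted_sg G e = insert 0 ((\<lambda>s. e + s) ` G)"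

end

theory Submission
  imports Defs
begin

theorem lemma4p3:
  fixes G :: "nat set" and e m m' :: nat
  assumes "numerical_semigroup G" and "e \<in> G" and "m \<in> G" and "m' \<in> G"
  shows "(Dset2 (shifted_sg G e) (2*e + m) (2*e + m')
           = ((\<lambda>s. e + s) ` Dset2 G m m') \<union> {0, 2*e + m, 2*e + m'})
         \<and> (\<bar>int m - int m'\<bar> < int e \<longrightarrow>
           (((\<lambda>s. e + s) ` Dset2 G m m') \<inter> {0, 2*e + m, 2*e + m'} = {})
         \<and> card (Dset2 G m m') + 2 \<le> card (Dset2 (shifted_sg G e) (2*e + m) (2*e + m'))
         \<and> card (Dset2 (shifted_sg G e) (2*e + m) (2*e + m')) \<le> card (Dset2 G m m') + 3)"
proof -
  have z: "0 \<in> G" and add: "\<And>a b. a \<in> G \<Longrightarrow> b \<in> G \<Longrightarrow> a + b \<in> G"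
    using assms(1) unfolding numerical_semigroup_def by auto
  have one: "Dset (shifted_sg G e) (2*e + k) = ((\<lambda>s. e + s) ` Dset G k) \<union> {0, 2*e + k}"
    if k: "k \<in> G" for k
  proof (rule set_eqI, rule iffI)
    fix x assume "x \<in> Dset (shifted_sg G e) (2*e + k)"
    then have x: "x \<in> shifted_sg G e" "x \<le> 2*e+k" "2*e+k-x \<in> shifted_sg G e"
      unfolding Dset_def by auto
    show "x \<in> ((\<lambda>s. e + s) ` Dset G k) \<union> {0, 2*e + k}"
    proof (cases "x = 0 \<or> x = 2*e+k")
      case True then show ?thesis by auto
    next
      case False
      then obtain s where s: "s \<in> G" "x = e + s" using x(1) unfolding shifted_sg_def by auto
      have "2*e+k-x \<noteq> 0" using False x(2) by auto
      then obtain t where t: "t \<in> G" "2*e+k-x = e + t" using x(3) unfolding shifted_sg_def by auto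
      have "s \<le> k" "k - s = t" using s t x(2) by auto
      then have "s \<in> Dset G k" using s t unfolding Dset_def by auto
      then show ?thesis using s by auto
    qed
  next
    fix x assume "x \<in> ((\<lambda>s. e + s) ` Dset G k) \<union> {0, 2*e + k}"
    moreover have "2*e+k \<in> shifted_sg G e" unfolding shifted_sg_def
      using add[OF assms(2) k] by (auto intro!: image_eqI[where x="e+k"])
    moreover have "0 \<in> shifted_sg G e" unfolding shifted_sg_def by auto
    moreover {
      fix s assume "s \<in> Dset G k"
      then have "s \<in> G" "s \<le> k" "k - s \<in> G" unfolding Dset_def by auto
      then have "e + s \<in> Dset (shifted_sg G e) (2*e + k)" unfolding Dset_def shifted_sg_def
        by (auto intro!: image_eqI[where x="k-s"])
    }
    ultimately show "x \<in> Dset (shifted_sg G e) (2*e + k)" unfolding Dset_def by auto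
  qed
  have eq: "Dset2 (shifted_sg G e) (2*e + m) (2*e + m')
           = ((\<lambda>s. e + s) ` Dset2 G m m') \<union> {0, 2*e + m, 2*e + m'}"
    unfolding Dset2_def using one[OF assms(3)] one[OF assms(4)] by auto
  have fin: "finite (Dset2 G m m')"
    by (rule finite_subset[of _ "{..m+m'}"]) (auto simp: Dset2_def Dset_def)
  have inj: "card ((\<lambda>s. e + s) ` Dset2 G m m') = card (Dset2 G m m')"
    by (rule card_image) (auto simp: inj_on_def)
  show ?thesis
  proof (intro conjI impI)
    assume lt: "\<bar>int m - int m'\<bar> < int e"
    have bnd: "\<And>s. s \<in> Dset2 G m m' \<Longrightarrow> s \<le> m \<or> s \<le> m'"
      unfolding Dset2_def Dset_def by auto
    show disj: "((\<lambda>s. e + s) ` Dset2 G m m') \<inter> {0, 2*e + m, 2*e + m'} = {}"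
    proof (rule ccontr)
      assume "\<not> ?thesis"
      then obtain s where "s \<in> Dset2 G m m'" "e + s \<in> {0, 2*e + m, 2*e + m'}" by auto
      then show False using bnd lt by fastforce
    qed
    have c3: "card {0, 2*e + m, 2*e + m'} \<le> 3" by (rule order_trans[OF card_insert_le_m1]) (auto simp: card_insert_le_m1)
    have c2: "card {0, 2*e + m, 2*e + m'} \<ge> 2" proof -
      have "e > 0" using lt by linarith
      then have "card {0, 2*e + m} = 2" by simp
      moreover have "card {0, 2*e + m} \<le> card {0, 2*e + m, 2*e + m'}"
        by (rule card_mono) auto
      ultimately show ?thesis by simp
    qed
    have cu: "card (Dset2 (shifted_sg G e) (2*e + m) (2*e + m')) =
       card (Dset2 G m m') + card {0, 2*e + m, 2*e + m'}"
      unfolding eq using card_Un_disjoint[OF finite_imageI[OF fin] _ disj] inj by simp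
    show "card (Dset2 G m m') + 2 \<le> card (Dset2 (shifted_sg G e) (2*e + m) (2*e + m'))"
      using cu c2 by simp
    show "card (Dset2 (shifted_sg G e) (2*e + m) (2*e + m')) \<le> card (Dset2 G m m') + 3"
      using cu c3 by simp
  qed (fact eq)
qed

end
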